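(* Let $\varphi$ be a metric formula built only with non-empty intervals $[m,n)$ ($m<n$), let $(\langle \mathbf{H},\mathbf{T}\rangle,\tau)$ be a strict timed HT-trace of length $\lambda>0$, let $\langle D,H,T\rangle$ be its corresponding $QHT[\preccurlyeq_\delta]$ interpretation, and let $i\in[0,\lambda)$. Then $$(\langle \mathbf{H},\mathbf{T}\rangle,\tau),i\models\varphi \iff \langle D,H,T\rangle\models[\varphi]_{\tau(i)},$$ $$(\langle \mathbf{T},\mathbf{T}\rangle,\tau),i\models\varphi \iff \langle D,T,T\rangle\models[\varphi]_{\tau(i)}.$$
   Context: Metric formulas over an alphabet $\mathcal{A}$: $\varphi ::= p \mid \bot \mid \varphi_1\otimes\varphi_2 \mid \bullet_I\varphi \mid \varphi_1\,\mathsf{S}_I\,\varphi_2 \mid \varphi_1\,\mathsf{T}_I\,\varphi_2 \mid \bigcirc_I\varphi \mid \varphi_1\,\mathsf{U}_I\,\varphi_2 \mid \varphi_1\,\mathsf{R}_I\,\varphi_2$, with $p\in\mathcal{A}$, $\otimes\in\{\to,\wedge,\vee\}$, $I=[m,n)$, $m\in\mathbb{N}$, $n\in\mathbb{N}\cup\{\omega\}$ (previous, since, trigger, next, until, release). Derived: $\neg\varphi=\varphi\to\bot$, $\top=\neg\bot$, weak previous $\widehat{\bullet}_I\varphi=\bullet_I\varphi\vee\neg\bullet_I\top$, weak next $\widehat{\bigcirc}_I\varphi=\bigcirc_I\varphi\vee\neg\bigcirc_I\top$. A timed HT-trace of length $\lambda\in\mathbb{N}\cup\{\omega\}$ is $(\langle\mathbf{H},\mathbf{T}\rangle,\tau)$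 with $\mathbf{H}=(H_i)_{i\in[0,\lambda)}$, $\mathbf{T}=(T_i)_{i\in[0,\lambda)}$, $H_i\subseteq T_i\subseteq\mathcal{A}$, and $\tau:[0,\lambda)\to\mathbb{N}$, $\tau(0)=0$, $\tau(i)\le\tau(i+1)$; it is strict if $\tau(i)<\tau(i+1)$ whenever $i+1<\lambda$. Satisfaction at $k\in[0,\lambda)$ for $\mathbf{M}=(\langle\mathbf{H},\mathbf{T}\rangle,\tau)$: $\mathbf{M},k\not\models\bot$; $\mathbf{M},k\models p$ iff $p\in H_k$; $\wedge,\vee$ as usual; $\mathbf{M},k\models\varphi\to\psi$ iff for both $\mathbf{M}'=\mathbf{M}$ and $\mathbf{M}'=(\langle\mathbf{T},\mathbf{T}\rangle,\tau)$, $\mathbf{M}',k\not\models\varphi$ or $\mathbf{M}',k\models\psi$; $\bullet_I\varphi$: $k>0$, $\mathbf{M},k-1\models\varphi$ and $\tau(k)-\tau(k-1)\in I$; $\varphi\,\mathsf{S}_I\,\psi$: for some $j\in[0,k]$ with $\tau(k)-\tau(j)\in I$, $\mathbf{M},j\models\psi$ and $\mathbf{M},i\models\varphi$ for all $i\in(j,k]$; $\varphi\,\mathsf{T}_I\,\psi$: for all $j\in[0,k]$ with $\tau(k)-\tau(j)\in I$, $\mathbf{M},j\models\psi$ or $\mathbf{M},i\models\varphi$ for some $i\in(j,k]$; $\bigcirc_I\varphi$: $k+1<\lambda$, $\mathbf{M},k+1\models\varphi$, $\tau(k+1)-\tau(k)\in I$; $\varphi\,\mathsf{U}_I\,\psi$: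 for some $j\in[k,\lambda)$ with $\tau(j)-\tau(k)\in I$, $\mathbf{M},j\models\psi$ and $\mathbf{M},i\models\varphi$ for all $i\in[k,j)$; $\varphi\,\mathsf{R}_I\,\psi$: for all $j\in[k,\lambda)$ with $\tau(j)-\tau(k)\in I$, $\mathbf{M},j\models\psi$ or $\mathbf{M},i\models\varphi$ for some $i\in[k,j)$. $QHT[\preccurlyeq_\delta]$: function-free first-order language with constant $0$, monadic predicates $p/1$ for $p\in\mathcal{A}$, and binary predicates $\preccurlyeq_\delta$, $\delta\in\mathbb{Z}\cup\{\omega\}$. An interpretation is $\langle D,H,T\rangle$ with $0\in D\subseteq\mathbb{N}$, $H\subseteq T\subseteq\{p(d)\mid p\in\mathcal{A},d\in D\}$. Satisfaction: $\langle D,H,T\rangle\models p(t)$ iff $p(t)\in H$; $\models t_1\preccurlyeq_\delta t_2$ iff $t_1-t_2\le\delta$; $\wedge,\vee$ as usual; $\models\varphi\to\psi$ iff for $X\in\{H,T\}$, $\langle D,X,T\rangle\not\models\varphi$ or $\langle D,X,T\rangle\models\psi$; $\forall x\,\varphi(x)$ iff $\varphi(t)$ holds for all $t\in D$; $\exists x\,\varphi(x)$ iff for some $t\in D$. Abbreviations: $x\prec_\delta y:=\neg(y\preccurlyeq_{-\delta}x)$, $x\le y:=x\preccurlyeq_0 y$, $x=y:=x\le y\wedge y\le x$, $x<y:=x\le y\wedge\neg(x=y)$, and $x\odot y\oplus z$ means $x\odot y\wedge y\oplus z$. Translation $[\cdot]_x$ (each quantifier introducing a fresh variable), for $I=[m,n)$: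 $[\bot]_x=\bot$; $[p]_x=p(x)$; $[\varphi\otimes\psi]_x=[\varphi]_x\otimes[\psi]_x$; $[\bigcirc_{[m,n)}\psi]_x=\exists y(x<y\wedge\neg\exists z\,(x<z<y)\wedge x\preccurlyeq_{-m}y\prec_n x\wedge[\psi]_y)$; $[\widehat{\bigcirc}_{[m,n)}\psi]_x=\forall y(x<y\wedge\neg\exists z\,(x<z<y)\wedge x\preccurlyeq_{-m}y\prec_n x\to[\psi]_y)$; $[\varphi\,\mathsf{U}_{[m,n)}\,\psi]_x=\exists y(x\le y\wedge x\preccurlyeq_{-m}y\prec_n x\wedge[\psi]_y\wedge\forall z(x\le z<y\to[\varphi]_z))$; $[\varphi\,\mathsf{R}_{[m,n)}\,\psi]_x=\forall y((x\le y\wedge x\preccurlyeq_{-m}y\prec_n x)\to([\psi]_y\vee\exists z(x\le z<y\wedge[\varphi]_z)))$; $[\bullet_{[m,n)}\psi]_x=\exists y(y<x\wedge\neg\exists z(y<z<x)\wedge x\prec_n y\preccurlyeq_{-m}x\wedge[\psi]_y)$; $[\widehat{\bullet}_{[m,n)}\psi]_x=\forall y((y<x\wedge\neg\exists z(y<z<x)\wedge x\prec_n y\preccurlyeq_{-m}x)\to[\psi]_y)$; $[\varphi\,\mathsf{S}_{[m,n)}\,\psi]_x=\exists y(y\le x\wedge x\prec_n y\preccurlyeq_{-m}x\wedge[\psi]_y\wedge\forall z(y<z\le x\to[\varphi]_z))$; $[\varphi\,\mathsf{T}_{[m,n)}\,\psi]_x=\forall y((y\le x\wedge x\prec_n y\preccurlyeq_{-m}x)\to([\psi]_y\vee\exists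 z(y<z\le x\wedge[\varphi]_z)))$. The interpretation corresponding to $(\langle\mathbf{H},\mathbf{T}\rangle,\tau)$ of length $\lambda>0$ is $\langle D,H,T\rangle$ with $D=\{\tau(i)\mid i\in[0,\lambda)\}$, $H=\{p(\tau(i))\mid i\in[0,\lambda),p\in H_i\}$, $T=\{p(\tau(i))\mid i\in[0,\lambda),p\in T_i\}$. *)

theory Defs
  imports Main "HOL-Library.Extended_Nat"
begin

type_synonym interval = "nat \<times> enat"

definition inI :: "nat \<Rightarrow> interval \<Rightarrow> bool" where
  "inI d I = (fst I \<le> d \<and> enat d < snd I)"

text \<open>Weak previous / weak next are included as constructors (their semantics is that of
  the derived forms) so that the dedicated translation clauses of the paper apply to them.\<close>
datatype 'a mformula =
    Atom 'a
  | MBot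
  | MImp "'a mformula" "'a mformula"
  | MAnd "'a mformula" "'a mformula"
  | MOr "'a mformula" "'a mformula"
  | Prev interval "'a mformula"
  | Since interval "'a mformula" "'a mformula"
  | Trigger interval "'a mformula" "'a mformula"
  | Next interval "'a mformula"
  | Until interval "'a mformula" "'a mformula"
  | Release interval "'a mformula" "'a mformula"
  | WPrev interval "'a mformula"
  | WNext interval "'a mformula"

fun nonempty_intervals :: "'a mformula \<Rightarrow> bool" where
  "nonempty_intervals (Atom p) = True"
| "nonempty_intervals MBot = True"
| "nonempty_intervals (MImp a b) = (nonempty_intervals a \<and> nonempty_intervals b)"
| "nonempty_intervals (MAnd a b) = (nonempty_intervals a \<and> nonempty_intervals b)"
| "nonempty_intervals (MOr a b) = (nonempty_intervals a \<and> nonempty_intervals b)"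
| "nonempty_intervals (Prev I a) = (enat (fst I) < snd I \<and> nonempty_intervals a)"
| "nonempty_intervals (Since I a b) = (enat (fst I) < snd I \<and> nonempty_intervals a \<and> nonempty_intervals b)"
| "nonempty_intervals (Trigger I a b) = (enat (fst I) < snd I \<and> nonempty_intervals a \<and> nonempty_intervals b)"
| "nonempty_intervals (Next I a) = (enat (fst I) < snd I \<and> nonempty_intervals a)"
| "nonempty_intervals (Until I a b) = (enat (fst I) < snd I \<and> nonempty_intervals a \<and> nonempty_intervals b)"
| "nonempty_intervals (Release I a b) = (enat (fst I) < snd I \<and> nonempty_intervals a \<and> nonempty_intervals b)"
| "nonempty_intervals (WPrev I a) = (enat (fst I) < snd I \<and> nonempty_intervals a)"
| "nonempty_intervals (WNext I a) = (enat (fst I) < snd I \<and> nonempty_intervals a)"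

text \<open>A trace of length L (enat, \<infinity> = omega) is given by H, T, tau :: nat => _;
  only positions i with enat i < L matter.\<close>
definition timed_ht_trace :: "enat \<Rightarrow> (nat \<Rightarrow> 'a set) \<Rightarrow> (nat \<Rightarrow> 'a set) \<Rightarrow> (nat \<Rightarrow> nat) \<Rightarrow> bool" where
  "timed_ht_trace L H T \<tau> =
     ((\<forall>i. enat i < L \<longrightarrow> H i \<subseteq> T i) \<and> \<tau> 0 = 0 \<and>
      (\<forall>i. enat (Suc i) < L \<longrightarrow> \<tau> i \<le> \<tau> (Suc i)))"

definition strict_timed_ht_trace :: "enat \<Rightarrow> (nat \<Rightarrow> 'a set) \<Rightarrow> (nat \<Rightarrow> 'a set) \<Rightarrow> (nat \<Rightarrow> nat) \<Rightarrow> bool" where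
  "strict_timed_ht_trace L H T \<tau> =
     (timed_ht_trace L H T \<tau> \<and> (\<forall>i. enat (Suc i) < L \<longrightarrow> \<tau> i < \<tau> (Suc i)))"

text \<open>WPrev/WNext: semantics of the derived forms  \<bullet>\<phi> \<or> \<not>\<bullet>\<top>  and  \<circle>\<phi> \<or> \<not>\<circle>\<top>, with
  \<not>\<bullet>\<top> (resp. \<not>\<circle>\<top>) unfolded (they do not depend on the here-component).\<close>
fun msat :: "enat \<Rightarrow> (nat \<Rightarrow> 'a set) \<Rightarrow> (nat \<Rightarrow> 'a set) \<Rightarrow> (nat \<Rightarrow> nat) \<Rightarrow> nat \<Rightarrow> 'a mformula \<Rightarrow> bool" where
  "msat L H T \<tau> k (Atom p) = (p \<in> H k)"
| "msat L H T \<tau> k MBot = False"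
| "msat L H T \<tau> k (MImp a b) =
     ((msat L H T \<tau> k a \<longrightarrow> msat L H T \<tau> k b) \<and> (msat L T T \<tau> k a \<longrightarrow> msat L T T \<tau> k b))"
| "msat L H T \<tau> k (MAnd a b) = (msat L H T \<tau> k a \<and> msat L H T \<tau> k b)"
| "msat L H T \<tau> k (MOr a b) = (msat L H T \<tau> k a \<or> msat L H T \<tau> k b)"
| "msat L H T \<tau> k (Prev I a) = (0 < k \<and> msat L H T \<tau> (k - 1) a \<and> inI (\<tau> k - \<tau> (k - 1)) I)"
| "msat L H T \<tau> k (Since I a b) =
     (\<exists>j\<le>k. inI (\<tau> k - \<tau> j) I \<and> msat L H T \<tau> j b \<and> (\<forall>i. j < i \<and> i \<le> k \<longrightarrow> msat L H T \<tau> i a))"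
| "msat L H T \<tau> k (Trigger I a b) =
     (\<forall>j\<le>k. inI (\<tau> k - \<tau> j) I \<longrightarrow> msat L H T \<tau> j b \<or> (\<exists>i. j < i \<and> i \<le> k \<and> msat L H T \<tau> i a))"
| "msat L H T \<tau> k (Next I a) = (enat (Suc k) < L \<and> msat L H T \<tau> (Suc k) a \<and> inI (\<tau> (Suc k) - \<tau> k) I)"
| "msat L H T \<tau> k (Until I a b) =
     (\<exists>j. k \<le> j \<and> enat j < L \<and> inI (\<tau> j - \<tau> k) I \<and> msat L H T \<tau> j b \<and>
          (\<forall>i. k \<le> i \<and> i < j \<longrightarrow> msat L H T \<tau> i a))"
| "msat L H T \<tau> k (Release I a b) =
     (\<forall>j. k \<le> j \<and> enat j < L \<and> inI (\<tau> j - \<tau> k) I \<longrightarrow>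
          msat L H T \<tau> j b \<or> (\<exists>i. k \<le> i \<and> i < j \<and> msat L H T \<tau> i a))"
| "msat L H T \<tau> k (WPrev I a) =
     ((0 < k \<and> msat L H T \<tau> (k - 1) a \<and> inI (\<tau> k - \<tau> (k - 1)) I) \<or>
      \<not> (0 < k \<and> inI (\<tau> k - \<tau> (k - 1)) I))"
| "msat L H T \<tau> k (WNext I a) =
     ((enat (Suc k) < L \<and> msat L H T \<tau> (Suc k) a \<and> inI (\<tau> (Suc k) - \<tau> k) I) \<or>
      \<not> (enat (Suc k) < L \<and> inI (\<tau> (Suc k) - \<tau> k) I))"

datatype delta = DFin int | DOmega

datatype fterm = FVar nat | FZero

datatype 'a fo =
    FBot
  | FPred 'a fterm
  | FLeq delta fterm fterm
  | FAnd "'a fo" "'a fo"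
  | FOr "'a fo" "'a fo"
  | FImp "'a fo" "'a fo"
  | FAll nat "'a fo"
  | FEx nat "'a fo"

fun teval :: "(nat \<Rightarrow> nat) \<Rightarrow> fterm \<Rightarrow> nat" where
  "teval e (FVar v) = e v"
| "teval e FZero = 0"

text \<open>Interpretation \<langle>D,X,T\<rangle>; ground atoms p(d) are represented as pairs (p,d).\<close>
fun fo_sat :: "nat set \<Rightarrow> ('a \<times> nat) set \<Rightarrow> ('a \<times> nat) set \<Rightarrow> (nat \<Rightarrow> nat) \<Rightarrow> 'a fo \<Rightarrow> bool" where
  "fo_sat D X T e FBot = False"
| "fo_sat D X T e (FPred p t) = ((p, teval e t) \<in> X)"
| "fo_sat D X T e (FLeq (DFin d) t1 t2) = (int (teval e t1) - int (teval e t2) \<le> d)"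
| "fo_sat D X T e (FLeq DOmega t1 t2) = True"
| "fo_sat D X T e (FAnd a b) = (fo_sat D X T e a \<and> fo_sat D X T e b)"
| "fo_sat D X T e (FOr a b) = (fo_sat D X T e a \<or> fo_sat D X T e b)"
| "fo_sat D X T e (FImp a b) =
     ((fo_sat D X T e a \<longrightarrow> fo_sat D X T e b) \<and> (fo_sat D T T e a \<longrightarrow> fo_sat D T T e b))"
| "fo_sat D X T e (FAll v a) = (\<forall>d\<in>D. fo_sat D X T (e(v := d)) a)"
| "fo_sat D X T e (FEx v a) = (\<exists>d\<in>D. fo_sat D X T (e(v := d)) a)"

definition FNeg :: "'a fo \<Rightarrow> 'a fo" where "FNeg a = FImp a FBot"
definition FTop :: "'a fo" where "FTop = FNeg FBot"
definition Fle :: "nat \<Rightarrow> nat \<Rightarrow> 'a fo" where "Fle x y = FLeq (DFin 0) (FVar x) (FVar y)"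
definition Feq :: "nat \<Rightarrow> nat \<Rightarrow> 'a fo" where "Feq x y = FAnd (Fle x y) (Fle y x)"
definition Flt :: "nat \<Rightarrow> nat \<Rightarrow> 'a fo" where "Flt x y = FAnd (Fle x y) (FNeg (Feq x y))"
definition Fprecneg :: "nat \<Rightarrow> nat \<Rightarrow> nat \<Rightarrow> 'a fo" where
  "Fprecneg x m y = FLeq (DFin (- int m)) (FVar x) (FVar y)"
text \<open>x \<prec>_n y := \<not>(y \<preccurlyeq>_{-n} x); for n = \<omega>, y \<preccurlyeq>_{-\<omega>} x never holds, so x \<prec>_\<omega> y is \<top>.\<close>
definition Fprec :: "nat \<Rightarrow> enat \<Rightarrow> nat \<Rightarrow> 'a fo" where
  "Fprec x n y = (case n of enat k \<Rightarrow> FNeg (FLeq (DFin (- int k)) (FVar y) (FVar x)) | \<infinity> \<Rightarrow> FTop)"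
definition Ffut :: "nat \<Rightarrow> nat \<Rightarrow> interval \<Rightarrow> 'a fo" where
  "Ffut x y I = FAnd (Fprecneg x (fst I) y) (Fprec y (snd I) x)"
definition Fpast :: "nat \<Rightarrow> nat \<Rightarrow> interval \<Rightarrow> 'a fo" where
  "Fpast x y I = FAnd (Fprec x (snd I) y) (Fprecneg y (fst I) x)"

text \<open>Translation  tr \<phi> x k = [\<phi>]_x, where x is a variable and all variables \<ge> k are fresh;
  each quantifier introduces a fresh variable (y = k, z = k+1).\<close>
fun tr :: "'a mformula \<Rightarrow> nat \<Rightarrow> nat \<Rightarrow> 'a fo" where
  "tr MBot x k = FBot"
| "tr (Atom p) x k = FPred p (FVar x)"
| "tr (MImp a b) x k = FImp (tr a x k) (tr b x k)"
| "tr (MAnd a b) x k = FAnd (tr a x k) (tr b x k)"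
| "tr (MOr a b) x k = FOr (tr a x k) (tr b x k)"
| "tr (Next I a) x k =
     FEx k (FAnd (Flt x k) (FAnd (FNeg (FEx (Suc k) (FAnd (Flt x (Suc k)) (Flt (Suc k) k))))
       (FAnd (Ffut x k I) (tr a k (Suc k)))))"
| "tr (WNext I a) x k =
     FAll k (FImp (FAnd (Flt x k) (FAnd (FNeg (FEx (Suc k) (FAnd (Flt x (Suc k)) (Flt (Suc k) k))))
       (Ffut x k I))) (tr a k (Suc k)))"
| "tr (Until I a b) x k =
     FEx k (FAnd (Fle x k) (FAnd (Ffut x k I) (FAnd (tr b k (Suc k))
       (FAll (Suc k) (FImp (FAnd (Fle x (Suc k)) (Flt (Suc k) k)) (tr a (Suc k) (Suc (Suc k))))))))"
| "tr (Release I a b) x k =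
     FAll k (FImp (FAnd (Fle x k) (Ffut x k I)) (FOr (tr b k (Suc k))
       (FEx (Suc k) (FAnd (FAnd (Fle x (Suc k)) (Flt (Suc k) k)) (tr a (Suc k) (Suc (Suc k)))))))"
| "tr (Prev I a) x k =
     FEx k (FAnd (Flt k x) (FAnd (FNeg (FEx (Suc k) (FAnd (Flt k (Suc k)) (Flt (Suc k) x))))
       (FAnd (Fpast x k I) (tr a k (Suc k)))))"
| "tr (WPrev I a) x k =
     FAll k (FImp (FAnd (Flt k x) (FAnd (FNeg (FEx (Suc k) (FAnd (Flt k (Suc k)) (Flt (Suc k) x))))
       (Fpast x k I))) (tr a k (Suc k)))"
| "tr (Since I a b) x k =
     FEx k (FAnd (Fle k x) (FAnd (Fpast x k I) (FAnd (tr b k (Suc k))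
       (FAll (Suc k) (FImp (FAnd (Flt k (Suc k)) (Fle (Suc k) x)) (tr a (Suc k) (Suc (Suc k))))))))"
| "tr (Trigger I a b) x k =
     FAll k (FImp (FAnd (Fle k x) (Fpast x k I)) (FOr (tr b k (Suc k))
       (FEx (Suc k) (FAnd (FAnd (Flt k (Suc k)) (Fle (Suc k) x)) (tr a (Suc k) (Suc (Suc k)))))))"

definition trace_dom :: "enat \<Rightarrow> (nat \<Rightarrow> nat) \<Rightarrow> nat set" where
  "trace_dom L \<tau> = {\<tau> i | i. enat i < L}"

definition trace_atoms :: "enat \<Rightarrow> (nat \<Rightarrow> nat) \<Rightarrow> (nat \<Rightarrow> 'a set) \<Rightarrow> ('a \<times> nat) set" where
  "trace_atoms L \<tau> X = {(p, \<tau> i) | p i. enat i < L \<and> p \<in> X i}"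

end

theory Submission
  imports Defs
begin

lemma fo_Flt[simp]: "fo_sat D X T e (Flt x y) = (e x < e y)"
  by (auto simp: Flt_def Fle_def Feq_def FNeg_def)
lemma fo_Fle[simp]: "fo_sat D X T e (Fle x y) = (e x \<le> e y)"
  by (auto simp: Fle_def)
lemma fo_FNeg[simp]: "fo_sat D X T e (FNeg a) = (\<not> fo_sat D X T e a \<and> \<not> fo_sat D T T e a)"
  by (auto simp: FNeg_def)
lemma fo_Ffut: "e x \<le> e y \<Longrightarrow> fo_sat D X T e (Ffut x y I) = inI (e y - e x) I"
  by (cases I; cases "snd I") (auto simp: Ffut_def Fprec_def Fprecneg_def inI_def FTop_def FNeg_def)
lemma fo_Fpast: "e y \<le> e x \<Longrightarrow> fo_sat D X T e (Fpast x y I) = inI (e x - e y) I"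
  by (cases I; cases "snd I") (auto simp: Fpast_def Fprec_def Fprecneg_def inI_def FTop_def FNeg_def)

lemma fo_persist: "X \<subseteq> T \<Longrightarrow> fo_sat D X T e a \<Longrightarrow> fo_sat D T T e a"
proof (induction a arbitrary: e)
  case (FLeq d t1 t2) then show ?case by (cases d) auto
qed auto

lemma Bex_dom: "(\<exists>d\<in>trace_dom L \<tau>. P d) = (\<exists>i. enat i < L \<and> P (\<tau> i))"
  by (auto simp: trace_dom_def)
lemma Ball_dom: "(\<forall>d\<in>trace_dom L \<tau>. P d) = (\<forall>i. enat i < L \<longrightarrow> P (\<tau> i))"
  by (auto simp: trace_dom_def)

lemma enat_le_less: "i \<le> j \<Longrightarrow> enat j < L \<Longrightarrow> enat i < L"
  by (meson enat_ord_simps(1) order_le_less_trans)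

locale tr_ctx =
  fixes L :: enat and \<tau> :: "nat \<Rightarrow> nat" and T :: "nat \<Rightarrow> 'a set"
  assumes mono: "\<And>i j. enat j < L \<Longrightarrow> i < j \<Longrightarrow> \<tau> i < \<tau> j"
begin

lemma less_iff[simp]: "enat i < L \<Longrightarrow> enat j < L \<Longrightarrow> (\<tau> i < \<tau> j) = (i < j)"
  by (metis mono not_less_iff_gr_or_eq order_less_asym)
lemma le_iff[simp]: "enat i < L \<Longrightarrow> enat j < L \<Longrightarrow> (\<tau> i \<le> \<tau> j) = (i \<le> j)"
  by (meson less_iff not_le)
lemma eq_iff[simp]: "enat i < L \<Longrightarrow> enat j < L \<Longrightarrow> (\<tau> i = \<tau> j) = (i = j)"
  by (metis less_iff nat_neq_iff)

lemma atoms_iff[simp]: "enat j < L \<Longrightarrow> ((p, \<tau> j) \<in> trace_atoms L \<tau> X) = (p \<in> X j)"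
  by (auto simp: trace_atoms_def)

lemma atoms_sub: "(\<And>i. enat i < L \<Longrightarrow> X i \<subseteq> T i) \<Longrightarrow> trace_atoms L \<tau> X \<subseteq> trace_atoms L \<tau> T"
  by (auto simp: trace_atoms_def)

lemma adj_prev[simp]: "enat i < L \<Longrightarrow> enat j < L \<Longrightarrow> i < j \<Longrightarrow>
   (\<forall>ia. \<tau> i < \<tau> ia \<longrightarrow> enat ia < L \<longrightarrow> \<not> ia < j) = (j = Suc i)"
proof
  assume "enat i < L" "enat j < L" "i < j" "\<forall>ia. \<tau> i < \<tau> ia \<longrightarrow> enat ia < L \<longrightarrow> \<not> ia < j"
  moreover have "enat (Suc i) < L" using \<open>i < j\<close> \<open>enat j < L\<close> by (simp add: Suc_le_eq enat_le_less)
  ultimately show "j = Suc i" using mono[of "Suc i" i] by (metis Suc_lessI lessI)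
qed auto

lemma adj_next[simp]: "enat i < L \<Longrightarrow> enat j < L \<Longrightarrow> j < i \<Longrightarrow>
   (\<forall>ia>j. enat ia < L \<longrightarrow> \<not> ia < i) = (i = Suc j)"
proof
  assume "enat i < L" "enat j < L" "j < i" "\<forall>ia>j. enat ia < L \<longrightarrow> \<not> ia < i"
  moreover have "enat (Suc j) < L" using \<open>j < i\<close> \<open>enat i < L\<close> by (simp add: Suc_le_eq enat_le_less)
  ultimately show "i = Suc j" by (metis Suc_lessI lessI)
qed auto

lemma persist:
  assumes "\<And>i. enat i < L \<Longrightarrow> X i \<subseteq> T i" "enat k < L" "msat L X T \<tau> k \<phi>"
  shows "msat L T T \<tau> k \<phi>"
  using assms
proof (induction \<phi> arbitrary: k)
  case (Prev I a)
  have "enat (k - 1) < L" using Prev.prems enat_le_less[of "k - 1" k L] by simp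
  then show ?case using Prev by simp
next
  case (Since I a b)
  from Since.prems(3) obtain j where j: "j \<le> k" "inI (\<tau> k - \<tau> j) I" "msat L X T \<tau> j b"
    "\<forall>i. j < i \<and> i \<le> k \<longrightarrow> msat L X T \<tau> i a" by auto
  have jL: "enat j < L" using j(1) Since.prems(2) by (rule enat_le_less)
  have "msat L T T \<tau> i a" if "j < i" "i \<le> k" for i
  proof -
    have "enat i < L" using that(2) Since.prems(2) by (rule enat_le_less)
    then show ?thesis using Since.IH(1)[OF Since.prems(1)] j(4) that by blast
  qed
  moreover have "msat L T T \<tau> j b" using Since.IH(2) Since.prems(1) jL j(3) by blast
  ultimately show ?case using j(1,2) by auto
next
  case (Trigger I a b)
  show ?case unfolding msat.simps
  proof (intro allI impI)
    fix j assume j: "j \<le> k" "inI (\<tau> k - \<tau> j) I"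
    have jL: "enat j < L" using j(1) Trigger.prems(2) by (rule enat_le_less)
    from Trigger.prems(3) j have "msat L X T \<tau> j b \<or> (\<exists>i. j < i \<and> i \<le> k \<and> msat L X T \<tau> i a)"
      by simp
    then show "msat L T T \<tau> j b \<or> (\<exists>i. j < i \<and> i \<le> k \<and> msat L T T \<tau> i a)"
    proof
      assume "msat L X T \<tau> j b" then show ?thesis using Trigger.IH(2)[OF Trigger.prems(1) jL] by blast
    next
      assume "\<exists>i. j < i \<and> i \<le> k \<and> msat L X T \<tau> i a"
      then obtain i where i: "j < i" "i \<le> k" "msat L X T \<tau> i a" by blast
      have "enat i < L" using i(2) Trigger.prems(2) by (rule enat_le_less)
      then show ?thesis using Trigger.IH(1)[OF Trigger.prems(1)] i by blast
    qed
  qed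
next
  case (Until I a b)
  from Until.prems(3) obtain j where j: "k \<le> j" "enat j < L" "inI (\<tau> j - \<tau> k) I" "msat L X T \<tau> j b"
    "\<forall>i. k \<le> i \<and> i < j \<longrightarrow> msat L X T \<tau> i a" by auto
  have "msat L T T \<tau> i a" if "k \<le> i" "i < j" for i
  proof -
    have "enat i < L" using less_imp_le[OF that(2)] j(2) by (rule enat_le_less)
    then show ?thesis using Until.IH(1)[OF Until.prems(1)] j(5) that by blast
  qed
  moreover have "msat L T T \<tau> j b" using Until.IH(2) Until.prems(1) j(2,4) by blast
  ultimately show ?case using j(1,2,3) by auto
next
  case (Release I a b)
  show ?case unfolding msat.simps
  proof (intro allI impI)
    fix j assume j: "k \<le> j \<and> enat j < L \<and> inI (\<tau> j - \<tau> k) I"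
    from Release.prems(3) j have "msat L X T \<tau> j b \<or> (\<exists>i. k \<le> i \<and> i < j \<and> msat L X T \<tau> i a)"
      by simp
    then show "msat L T T \<tau> j b \<or> (\<exists>i. k \<le> i \<and> i < j \<and> msat L T T \<tau> i a)"
    proof
      assume "msat L X T \<tau> j b" then show ?thesis using Release.IH(2)[OF Release.prems(1)] j by blast
    next
      assume "\<exists>i. k \<le> i \<and> i < j \<and> msat L X T \<tau> i a"
      then obtain i where i: "k \<le> i" "i < j" "msat L X T \<tau> i a" by blast
      have "enat i < L" using less_imp_le[OF i(2)] conjunct1[OF conjunct2[OF j]] by (rule enat_le_less)
      then show ?thesis using Release.IH(1)[OF Release.prems(1)] i by blast
    qed
  qed
next
  case (WPrev I a)
  have "enat (k - 1) < L" using WPrev.prems enat_le_less[of "k - 1" k L] by simp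
  then show ?case using WPrev by auto
next
  case (MImp a b) then show ?case by simp
next
  case (Next I a) then show ?case by simp
next
  case (WNext I a) then show ?case by auto
qed auto

lemma Suc_enat: "enat (Suc n) < L \<Longrightarrow> enat n < L"
  using enat_le_less[of n "Suc n" L] by simp
lemma less_enat: "i' < i \<Longrightarrow> enat i < L \<Longrightarrow> enat i' < L"
  using enat_le_less less_imp_le by blast

lemma main:
  assumes "x < k" "e x = \<tau> j" "enat j < L" "\<And>i. enat i < L \<Longrightarrow> X i \<subseteq> T i"
  shows "fo_sat (trace_dom L \<tau>) (trace_atoms L \<tau> X) (trace_atoms L \<tau> T) e (tr \<phi> x k) = msat L X T \<tau> j \<phi>"
  using assms
proof (induction \<phi> arbitrary: X x k e j)
  case (Atom p)
  then show ?case by simp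
next
  case MBot
  then show ?case by simp
next
  case (MImp a b)
  then show ?case by simp
next
  case (MAnd a b)
  then show ?case by simp
next
  case (MOr a b)
  then show ?case by simp
next
  case (Prev I a)
  have Lj: "enat j < L" by fact
  show ?case using Prev apply (simp add: Bex_dom Ball_dom fo_Fpast cong: conj_cong)
    using Lj by (cases j) (auto dest: Suc_enat)
next
  case (Since I a b)
  have P: "\<And>k \<psi>. enat k < L \<Longrightarrow> msat L X T \<tau> k \<psi> \<Longrightarrow> msat L T T \<tau> k \<psi>"
    using persist[OF Since.prems(4)] by blast
  have Lj: "enat j < L" by fact
  have Lle: "\<And>i. i \<le> j \<Longrightarrow> enat i < L" using Lj enat_le_less by blast
  show ?case using Since apply (simp add: Bex_dom Ball_dom fo_Fpast cong: conj_cong)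
    apply (rule iffI)
     apply (elim exE conjE)
    subgoal for j'
      apply (rule exI[of _ j'])
      using Lle by simp
    apply (elim exE conjE)
    subgoal for j'
      apply (rule exI[of _ j'])
      using P Lle by auto
    done
next
  case (Trigger I a b)
  have P: "\<And>k \<psi>. enat k < L \<Longrightarrow> msat L X T \<tau> k \<psi> \<Longrightarrow> msat L T T \<tau> k \<psi>"
    using persist[OF Trigger.prems(4)] by blast
  have Lj: "enat j < L" by fact
  have Lle: "\<And>i. i \<le> j \<Longrightarrow> enat i < L" using Lj enat_le_less by blast
  show ?case using Trigger apply (simp add: Bex_dom Ball_dom fo_Fpast cong: conj_cong)
    apply (rule iffI)
    subgoal
    proof (intro allI impI)
      fix i assume H: "\<forall>i. enat i < L \<longrightarrow>
            (i \<le> j \<and> inI (\<tau> j - \<tau> i) I \<longrightarrow>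
             msat L X T \<tau> i b \<or> (\<exists>ia. enat ia < L \<and> i < ia \<and> ia \<le> j \<and> msat L X T \<tau> ia a)) \<and>
            (i \<le> j \<and> inI (\<tau> j - \<tau> i) I \<longrightarrow>
             msat L T T \<tau> i b \<or> (\<exists>ia. enat ia < L \<and> i < ia \<and> ia \<le> j \<and> msat L T T \<tau> ia a))"
        and i: "i \<le> j" "inI (\<tau> j - \<tau> i) I"
      have "enat i < L" using Lle i(1) .
      then show "msat L X T \<tau> i b \<or> (\<exists>ia>i. ia \<le> j \<and> msat L X T \<tau> ia a)"
        using H i by auto
    qed
    subgoal
    proof (intro allI impI conjI)
      fix i assume H: "\<forall>i\<le>j. inI (\<tau> j - \<tau> i) I \<longrightarrow>
              msat L X T \<tau> i b \<or> (\<exists>ia>i. ia \<le> j \<and> msat L X T \<tau> ia a)"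
        and iL: "enat i < L"
      {
        assume i: "i \<le> j \<and> inI (\<tau> j - \<tau> i) I"
        then have D: "msat L X T \<tau> i b \<or> (\<exists>ia>i. ia \<le> j \<and> msat L X T \<tau> ia a)" using H by auto
        then show "msat L X T \<tau> i b \<or> (\<exists>ia. enat ia < L \<and> i < ia \<and> ia \<le> j \<and> msat L X T \<tau> ia a)"
          using Lle by auto
        from D show "msat L T T \<tau> i b \<or> (\<exists>ia. enat ia < L \<and> i < ia \<and> ia \<le> j \<and> msat L T T \<tau> ia a)"
        proof
          assume "msat L X T \<tau> i b" then show ?thesis using P iL by blast
        next
          assume "\<exists>ia>i. ia \<le> j \<and> msat L X T \<tau> ia a"
          then obtain ia where "i < ia" "ia \<le> j" "msat L X T \<tau> ia a" by blast
          moreover have "enat ia < L" using Lle \<open>ia \<le> j\<close> .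
          ultimately show ?thesis using P by blast
        qed
      }
    qed
    done
next
  case (Next I a)
  then show ?case by (simp add: Bex_dom Ball_dom fo_Ffut cong: conj_cong) (auto intro: less_enat)
next
  case (Until I a b)
  have P: "\<And>k \<psi>. enat k < L \<Longrightarrow> msat L X T \<tau> k \<psi> \<Longrightarrow> msat L T T \<tau> k \<psi>"
    using persist[OF Until.prems(4)] by blast
  show ?case using Until apply (simp add: Bex_dom Ball_dom fo_Ffut cong: conj_cong)
    using P less_enat by (auto 0 3)
next
  case (Release I a b)
  have P: "\<And>k \<psi>. enat k < L \<Longrightarrow> msat L X T \<tau> k \<psi> \<Longrightarrow> msat L T T \<tau> k \<psi>"
    using persist[OF Release.prems(4)] by blast
  show ?case using Release apply (simp add: Bex_dom Ball_dom fo_Ffut cong: conj_cong)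
    apply (rule iffI)
    subgoal
    proof (intro allI impI)
      fix i assume H: "\<forall>i. enat i < L \<longrightarrow>
            (j \<le> i \<and> inI (\<tau> i - \<tau> j) I \<longrightarrow>
             msat L X T \<tau> i b \<or> (\<exists>ia. enat ia < L \<and> j \<le> ia \<and> ia < i \<and> msat L X T \<tau> ia a)) \<and>
            (j \<le> i \<and> inI (\<tau> i - \<tau> j) I \<longrightarrow>
             msat L T T \<tau> i b \<or> (\<exists>ia. enat ia < L \<and> j \<le> ia \<and> ia < i \<and> msat L T T \<tau> ia a))"
        and i: "j \<le> i \<and> enat i < L \<and> inI (\<tau> i - \<tau> j) I"
      then show "msat L X T \<tau> i b \<or> (\<exists>ia\<ge>j. ia < i \<and> msat L X T \<tau> ia a)"
        by auto
    qed
    subgoal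
    proof (intro allI impI conjI)
      fix i assume H: "\<forall>i. j \<le> i \<and> enat i < L \<and> inI (\<tau> i - \<tau> j) I \<longrightarrow>
              msat L X T \<tau> i b \<or> (\<exists>ia\<ge>j. ia < i \<and> msat L X T \<tau> ia a)"
        and iL: "enat i < L"
      {
        assume i: "j \<le> i \<and> inI (\<tau> i - \<tau> j) I"
        then have D: "msat L X T \<tau> i b \<or> (\<exists>ia\<ge>j. ia < i \<and> msat L X T \<tau> ia a)" using H iL by auto
        then show "msat L X T \<tau> i b \<or> (\<exists>ia. enat ia < L \<and> j \<le> ia \<and> ia < i \<and> msat L X T \<tau> ia a)"
          using less_enat iL by blast
        from D show "msat L T T \<tau> i b \<or> (\<exists>ia. enat ia < L \<and> j \<le> ia \<and> ia < i \<and> msat L T T \<tau> ia a)"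
        proof
          assume "msat L X T \<tau> i b" then show ?thesis using P iL by blast
        next
          assume "\<exists>ia\<ge>j. ia < i \<and> msat L X T \<tau> ia a"
          then obtain ia where "j \<le> ia" "ia < i" "msat L X T \<tau> ia a" by blast
          moreover have "enat ia < L" using less_enat \<open>ia < i\<close> iL .
          ultimately show ?thesis using P by blast
        qed
      }
    qed
    done
next
  case (WPrev I a)
  have P: "\<And>k \<psi>. enat k < L \<Longrightarrow> msat L X T \<tau> k \<psi> \<Longrightarrow> msat L T T \<tau> k \<psi>"
    using persist[OF WPrev.prems(4)] by blast
  have Lj: "enat j < L" by fact
  show ?case using WPrev apply (simp add: Bex_dom Ball_dom fo_Fpast cong: conj_cong)
    using Lj P by (cases j) (auto dest: Suc_enat)
next
  case (WNext I a)
  have P: "\<And>k \<psi>. enat k < L \<Longrightarrow> msat L X T \<tau> k \<psi> \<Longrightarrow> msat L T T \<tau> k \<psi>"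
    using persist[OF WNext.prems(4)] by blast
  show ?case using WNext apply (simp add: Bex_dom Ball_dom fo_Ffut cong: conj_cong)
    using P less_enat by auto
qed
end
lemma strict_mono_tau:
  assumes "strict_timed_ht_trace L H T \<tau>"
  shows "\<And>i j. enat j < L \<Longrightarrow> i < j \<Longrightarrow> \<tau> i < \<tau> j"
proof -
  have S: "\<And>i. enat (Suc i) < L \<Longrightarrow> \<tau> i < \<tau> (Suc i)"
    using assms by (simp add: strict_timed_ht_trace_def)
  fix i j :: nat
  show "enat j < L \<Longrightarrow> i < j \<Longrightarrow> \<tau> i < \<tau> j"
  proof (induction j)
    case 0 then show ?case by simp
  next
    case (Suc j)
    have jL: "enat j < L" using Suc.prems(1) enat_le_less[of j "Suc j" L] by simp
    show ?case
    proof (cases "i = j")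
      case True then show ?thesis using S Suc.prems(1) by simp
    next
      case False
      then have "\<tau> i < \<tau> j" using Suc.IH jL Suc.prems(2) by simp
      then show ?thesis using S[of j] Suc.prems(1) by simp
    qed
  qed
qed

theorem theorem5:
  fixes \<phi> :: "'a mformula" and L :: enat and H T :: "nat \<Rightarrow> 'a set" and \<tau> :: "nat \<Rightarrow> nat" and i :: nat
  assumes "nonempty_intervals \<phi>"
    and "strict_timed_ht_trace L H T \<tau>"
    and "0 < L"
    and "enat i < L"
  shows "(msat L H T \<tau> i \<phi> \<longleftrightarrow>
            fo_sat (trace_dom L \<tau>) (trace_atoms L \<tau> H) (trace_atoms L \<tau> T) (\<lambda>_. \<tau> i) (tr \<phi> 0 1))
       \<and> (msat L T T \<tau> i \<phi> \<longleftrightarrow>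
            fo_sat (trace_dom L \<tau>) (trace_atoms L \<tau> T) (trace_atoms L \<tau> T) (\<lambda>_. \<tau> i) (tr \<phi> 0 1))"
proof -
  interpret tr_ctx L \<tau> T
    by unfold_locales (rule strict_mono_tau[OF assms(2)])
  have sub: "\<And>k. enat k < L \<Longrightarrow> H k \<subseteq> T k"
    using assms(2) by (simp add: strict_timed_ht_trace_def timed_ht_trace_def)
  have 1: "fo_sat (trace_dom L \<tau>) (trace_atoms L \<tau> H) (trace_atoms L \<tau> T) (\<lambda>_. \<tau> i) (tr \<phi> 0 1) = msat L H T \<tau> i \<phi>"
    by (rule main) (auto simp: assms(4) sub)
  have 2: "fo_sat (trace_dom L \<tau>) (trace_atoms L \<tau> T) (trace_atoms L \<tau> T) (\<lambda>_. \<tau> i) (tr \<phi> 0 1) = msat L T T \<tau> i \<phi>"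
    by (rule main) (auto simp: assms(4))
  show ?thesis using 1 2 by simp
qed

end
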